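(* Let $k$ be a perfect field of characteristic $p>0$, $P$ a finite poset, $R=\mathcal{R}_k[J(P)]$ the Hibi ring and $\mathfrak{m}=R_+$. Then \[ \operatorname{fpt}(\mathfrak{m})\le\min\{\operatorname{len}C\mid C\text{ a maximal chain in }\overline{P}\}=\min\{\operatorname{len}C\mid C\text{ a maximal chain in }P\}+2 . \]
   Context: $J(P)$ is the set of poset ideals of $P=\{p_1,\dots,p_N\}$ (down-closed subsets, including $\emptyset$ and $P$). The Hibi ring is $\mathcal{R}_k[J(P)]=k[\,T\prod_{p_i\in I}X_i\mid I\in J(P)\,]\subseteq k[T,X_1,\dots,X_N]$, each generator in degree $1$; $\mathfrak{m}=R_+$ is generated by these generators. $\overline{P}=P\cup\{-\infty,\infty\}$ with $-\infty<x<\infty$ for all $x\in P$. The length of a chain $C$ is $\#C-1$. For a real $t\ge0$, the pair $(R,\mathfrak{m}^t)$ is $F$-pure if for all large $q=p^e$ there is $d\in\mathfrak{m}^{\lceil t(q-1)\rceil}$ such that the $R$-linear map $R\to R^{1/q}$, $1\mapsto d^{1/q}$, splits; $\operatorname{fpt}(\mathfrak{m})=\sup\{t\ge0\mid(R,\mathfrak{m}^t)\text{ is }F\text{-pure}\}$. *)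

theory Defs
  imports "HOL-Analysis.Analysis" "HOL-Library.Poly_Mapping"
begin

inductive_set gen_alg :: "'r::comm_ring_1 set \<Rightarrow> 'r set \<Rightarrow> 'r set" for B G where
  base: "b \<in> B \<Longrightarrow> b \<in> gen_alg B G"
| gen: "g \<in> G \<Longrightarrow> g \<in> gen_alg B G"
| zero: "0 \<in> gen_alg B G"
| one: "1 \<in> gen_alg B G"
| uminus: "x \<in> gen_alg B G \<Longrightarrow> - x \<in> gen_alg B G"
| add: "x \<in> gen_alg B G \<Longrightarrow> y \<in> gen_alg B G \<Longrightarrow> x + y \<in> gen_alg B G"
| mult: "x \<in> gen_alg B G \<Longrightarrow> y \<in> gen_alg B G \<Longrightarrow> x * y \<in> gen_alg B G"

inductive_set ideal_gen :: "'r::comm_ring_1 set \<Rightarrow> 'r set \<Rightarrow> 'r set" for S G where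
  zero: "0 \<in> ideal_gen S G"
| lin: "r \<in> S \<Longrightarrow> g \<in> G \<Longrightarrow> r * g \<in> ideal_gen S G"
| add: "x \<in> ideal_gen S G \<Longrightarrow> y \<in> ideal_gen S G \<Longrightarrow> x + y \<in> ideal_gen S G"

fun prods :: "'r::comm_ring_1 set \<Rightarrow> nat \<Rightarrow> 'r set" where
  "prods I 0 = {1}"
| "prods I (Suc n) = {a * b | a b. a \<in> I \<and> b \<in> prods I n}"

definition ideal_pow :: "'r::comm_ring_1 set \<Rightarrow> 'r set \<Rightarrow> nat \<Rightarrow> 'r set" where
  "ideal_pow S I n = ideal_gen S (prods I n)"

text \<open>The S-linear map S \<rightarrow> S^{1/q}, 1 \<mapsto> d^{1/q} splits.  S^{1/q} is identified with
  the Frobenius pushforward F^e_* S (S as an S-module via r\<cdot>s = r^q s, s \<leftrightarrow> s^{1/q});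
  a splitting is an S-linear \<phi> : F^e_* S \<rightarrow> S with \<phi>(d) = 1.\<close>
definition frob_splits :: "'r::comm_ring_1 set \<Rightarrow> nat \<Rightarrow> 'r \<Rightarrow> bool" where
  "frob_splits S q d \<longleftrightarrow> d \<in> S \<and> (\<exists>\<phi>. (\<forall>x\<in>S. \<phi> x \<in> S)
      \<and> (\<forall>x\<in>S. \<forall>y\<in>S. \<phi> (x + y) = \<phi> x + \<phi> y)
      \<and> (\<forall>r\<in>S. \<forall>s\<in>S. \<phi> (r ^ q * s) = r * \<phi> s)
      \<and> \<phi> d = 1)"

definition F_pure :: "'r::comm_ring_1 set \<Rightarrow> 'r set \<Rightarrow> nat \<Rightarrow> real \<Rightarrow> bool" where
  "F_pure S I p t \<longleftrightarrow> (\<exists>e0. \<forall>e\<ge>e0. \<exists>d \<in> ideal_pow S I (nat \<lceil>t * (real (p ^ e) - 1)\<rceil>).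
      frob_splits S (p ^ e) d)"

definition fpt :: "'r::comm_ring_1 set \<Rightarrow> 'r set \<Rightarrow> nat \<Rightarrow> ereal" where
  "fpt S I p = Sup {ereal t | t. t \<ge> 0 \<and> F_pure S I p t}"

definition is_poset :: "'a set \<Rightarrow> ('a \<Rightarrow> 'a \<Rightarrow> bool) \<Rightarrow> bool" where
  "is_poset P le \<longleftrightarrow> (\<forall>x\<in>P. le x x) \<and> (\<forall>x\<in>P. \<forall>y\<in>P. le x y \<and> le y x \<longrightarrow> x = y)
     \<and> (\<forall>x\<in>P. \<forall>y\<in>P. \<forall>z\<in>P. le x y \<and> le y z \<longrightarrow> le x z)"

definition poset_ideals :: "'a set \<Rightarrow> ('a \<Rightarrow> 'a \<Rightarrow> bool) \<Rightarrow> 'a set set" where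
  "poset_ideals P le = {I. I \<subseteq> P \<and> (\<forall>x\<in>I. \<forall>y\<in>P. le y x \<longrightarrow> y \<in> I)}"

definition is_chain :: "'a set \<Rightarrow> ('a \<Rightarrow> 'a \<Rightarrow> bool) \<Rightarrow> 'a set \<Rightarrow> bool" where
  "is_chain P le C \<longleftrightarrow> C \<subseteq> P \<and> (\<forall>x\<in>C. \<forall>y\<in>C. le x y \<or> le y x)"

definition is_max_chain :: "'a set \<Rightarrow> ('a \<Rightarrow> 'a \<Rightarrow> bool) \<Rightarrow> 'a set \<Rightarrow> bool" where
  "is_max_chain P le C \<longleftrightarrow> is_chain P le C \<and> (\<forall>D. is_chain P le D \<and> C \<subseteq> D \<longrightarrow> D = C)"

definition chain_len :: "'a set \<Rightarrow> int" where
  "chain_len C = int (card C) - 1"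

datatype 'a ext = MInf | Elt 'a | PInf

fun le_bar :: "('a \<Rightarrow> 'a \<Rightarrow> bool) \<Rightarrow> 'a ext \<Rightarrow> 'a ext \<Rightarrow> bool" where
  "le_bar le MInf _ = True"
| "le_bar le (Elt x) MInf = False"
| "le_bar le (Elt x) (Elt y) = le x y"
| "le_bar le (Elt x) PInf = True"
| "le_bar le PInf y = (y = PInf)"

definition P_bar :: "'a set \<Rightarrow> 'a ext set" where
  "P_bar P = {MInf, PInf} \<union> Elt ` P"

text \<open>Ambient polynomial ring k[T, X_p : p \<in> P]: variable None is T, variable Some p is X_p.\<close>
type_synonym ('a, 'k) mpoly = "('a option \<Rightarrow>\<^sub>0 nat) \<Rightarrow>\<^sub>0 'k"

definition hibi_gen :: "'a set \<Rightarrow> ('a, 'k::comm_ring_1) mpoly" where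
  "hibi_gen I = Poly_Mapping.single
     (Poly_Mapping.single None 1 + (\<Sum>x\<in>I. Poly_Mapping.single (Some x) 1)) 1"

definition hibi_gens :: "'a set \<Rightarrow> ('a \<Rightarrow> 'a \<Rightarrow> bool) \<Rightarrow> ('a, 'k::comm_ring_1) mpoly set" where
  "hibi_gens P le = hibi_gen ` poset_ideals P le"

definition hibi_ring :: "'a set \<Rightarrow> ('a \<Rightarrow> 'a \<Rightarrow> bool) \<Rightarrow> ('a, 'k::comm_ring_1) mpoly set" where
  "hibi_ring P le = gen_alg (range (\<lambda>c. Poly_Mapping.single 0 c)) (hibi_gens P le)"

definition hibi_max :: "'a set \<Rightarrow> ('a \<Rightarrow> 'a \<Rightarrow> bool) \<Rightarrow> ('a, 'k::comm_ring_1) mpoly set" where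
  "hibi_max P le = ideal_gen (hibi_ring P le) (hibi_gens P le)"

end

theory Submission
  imports Defs
begin

abbreviation lk where "lk \<equiv> Poly_Mapping.lookup"
abbreviation sg where "sg \<equiv> Poly_Mapping.single"
abbreviation ks where "ks \<equiv> Poly_Mapping.keys"

lemma lookup_single_mult:
  fixes k j :: "'a::cancel_comm_monoid_add" and X :: "'a \<Rightarrow>\<^sub>0 'b::comm_semiring_1"
  shows "lk (sg k 1 * X) (k + j) = lk X j"
proof -
  have "lk (sg k 1 * X) (k + j)
     = (\<Sum>l. (1 when k = l) * (\<Sum>q. lk X q when k + j = l + q))"
    by (simp add: lookup_mult lookup_single)
  also have "\<dots> = (\<Sum>q. lk X q when k + j = k + q)"
    by (simp add: when_mult)
  also have "\<dots> = (\<Sum>q. lk X q when j = q)"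
    by simp
  also have "\<dots> = lk X j" by simp
  finally show ?thesis .
qed

lemma poset_bar:
  assumes "is_poset P le"
  shows "is_poset (P_bar P) (le_bar le)"
proof -
  note h = assms[unfolded is_poset_def]
  note r = h[THEN conjunct1] and a = h[THEN conjunct2, THEN conjunct1]
    and t = h[THEN conjunct2, THEN conjunct2]
  have 1: "le_bar le x x" if "x \<in> P_bar P" for x
    using that r by (cases x) (auto simp: P_bar_def)
  have a': "x = y" if "x\<in>P" "y\<in>P" "le x y" "le y x" for x y
    using a that by blast
  have 2: "x = y" if "x \<in> P_bar P" "y \<in> P_bar P" "le_bar le x y" "le_bar le y x" for x y
    using that apply (cases x; cases y)
    apply (simp_all add: P_bar_def image_iff)
    using a' by blast
  have t': "le x z" if "x\<in>P" "y\<in>P" "z\<in>P" "le x y" "le y z" for x y z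
    using t that by blast
  have 3: "le_bar le x z" if "x \<in> P_bar P" "y \<in> P_bar P" "z \<in> P_bar P"
     "le_bar le x y" "le_bar le y z" for x y z
    using that apply (cases x; cases y; cases z)
    apply (simp_all add: P_bar_def image_iff)
    using t' by blast
  show ?thesis unfolding is_poset_def using 1 2 3 by blast
qed

definition Bf :: "('a option \<Rightarrow>\<^sub>0 nat) \<Rightarrow> 'a ext \<Rightarrow> nat" where
  "Bf \<alpha> u = (case u of MInf \<Rightarrow> lk \<alpha> None | Elt z \<Rightarrow> lk \<alpha> (Some z) | PInf \<Rightarrow> 0)"

lemma Bf_simps[simp]: "Bf \<alpha> MInf = lk \<alpha> None" "Bf \<alpha> (Elt z) = lk \<alpha> (Some z)" "Bf \<alpha> PInf = 0"
  by (simp_all add: Bf_def)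

lemma Bf_add[simp]: "Bf (\<alpha> + \<beta>) u = Bf \<alpha> u + Bf \<beta> u"
  by (cases u) (simp_all add: lookup_add)

definition inS :: "'a set \<Rightarrow> ('a \<Rightarrow> 'a \<Rightarrow> bool) \<Rightarrow> ('a option \<Rightarrow>\<^sub>0 nat) \<Rightarrow> bool" where
  "inS P le \<alpha> \<longleftrightarrow> (\<forall>z. z \<notin> P \<longrightarrow> lk \<alpha> (Some z) = 0)
     \<and> (\<forall>u\<in>P_bar P. \<forall>v\<in>P_bar P. le_bar le u v \<longrightarrow> Bf \<alpha> v \<le> Bf \<alpha> u)"

lemma inS_add: "inS P le \<alpha> \<Longrightarrow> inS P le \<beta> \<Longrightarrow> inS P le (\<alpha> + \<beta>)"
  unfolding inS_def by (auto simp: lookup_add add_mono)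

lemma inS_zero: "inS P le 0"
  unfolding inS_def by (auto simp: Bf_def split: ext.splits)

definition to_exp :: "'a set \<Rightarrow> ('a ext \<Rightarrow> nat) \<Rightarrow> ('a option \<Rightarrow>\<^sub>0 nat)" where
  "to_exp P G = Abs_poly_mapping (\<lambda>w. case w of None \<Rightarrow> G MInf | Some z \<Rightarrow> if z \<in> P then G (Elt z) else 0)"

lemma lookup_to_exp:
  assumes "finite P"
  shows "lk (to_exp P G) = (\<lambda>w. case w of None \<Rightarrow> G MInf | Some z \<Rightarrow> if z \<in> P then G (Elt z) else 0)"
proof -
  have "{w. (case w of None \<Rightarrow> G MInf | Some z \<Rightarrow> if z \<in> P then G (Elt z) else 0) \<noteq> 0}
        \<subseteq> insert None (Some ` P)"
    apply (rule subsetI)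
    subgoal for x by (cases x) (auto split: if_splits)
    done
  then have "finite {w. (case w of None \<Rightarrow> G MInf | Some z \<Rightarrow> if z \<in> P then G (Elt z) else 0) \<noteq> 0}"
    using assms by (meson finite_imageI finite_insert finite_subset)
  then show ?thesis unfolding to_exp_def by simp
qed

lemma lookup_to_exp_simps[simp]:
  assumes "finite P"
  shows "lk (to_exp P G) None = G MInf" "z \<in> P \<Longrightarrow> lk (to_exp P G) (Some z) = G (Elt z)"
    "z \<notin> P \<Longrightarrow> lk (to_exp P G) (Some z) = 0"
  using lookup_to_exp[OF assms] by auto

lemma Bf_to_exp:
  assumes "finite P" "u \<in> P_bar P" "G PInf = 0"
  shows "Bf (to_exp P G) u = G u"
  using assms by (cases u) (auto simp: P_bar_def)

lemma inS_to_exp: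
  assumes "finite P" "G PInf = 0"
    and "\<And>u v. u \<in> P_bar P \<Longrightarrow> v \<in> P_bar P \<Longrightarrow> le_bar le u v \<Longrightarrow> G v \<le> G u"
  shows "inS P le (to_exp P G)"
  using assms unfolding inS_def by (simp add: Bf_to_exp)

lemma to_exp_eqI:
  assumes "finite P" "G MInf = H MInf" "\<And>z. z \<in> P \<Longrightarrow> G (Elt z) = H (Elt z)"
  shows "to_exp P G = to_exp P H"
  by (rule poly_mapping_eqI) (use assms in \<open>auto simp: lookup_to_exp split: option.splits\<close>)

lemma to_exp_Bf:
  assumes "finite P" "inS P le \<alpha>"
  shows "to_exp P (Bf \<alpha>) = \<alpha>"
  by (rule poly_mapping_eqI) (use assms in \<open>auto simp: lookup_to_exp inS_def split: option.splits\<close>)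

lemma to_exp_add:
  assumes "finite P"
  shows "to_exp P G + to_exp P H = to_exp P (\<lambda>u. G u + H u)"
  by (rule poly_mapping_eqI) (use assms in \<open>auto simp: lookup_to_exp lookup_add split: option.splits\<close>)

lemma single_pow: "(sg s (1::'k::comm_semiring_1)) ^ n = sg (\<Sum>i<n. s) 1"
  by (induction n) (simp_all add: mult_single add.commute)

lemma sum_const_to_exp:
  assumes "finite P"
  shows "(\<Sum>i<n. to_exp P G) = to_exp P (\<lambda>u. n * G u)"
proof (induction n)
  case 0
  show ?case by (rule poly_mapping_eqI) (simp add: lookup_to_exp[OF assms] split: option.splits)
next
  case (Suc n)
  then show ?case by (simp add: to_exp_add[OF assms] algebra_simps)
qed

definition gexp :: "'a set \<Rightarrow> ('a option \<Rightarrow>\<^sub>0 nat)" where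
  "gexp I = sg None 1 + (\<Sum>x\<in>I. sg (Some x) 1)"

lemma hibi_gen_gexp: "hibi_gen I = sg (gexp I) 1"
  by (simp add: hibi_gen_def gexp_def)

lemma lookup_gexp:
  assumes "finite I"
  shows "lk (gexp I) None = 1" "lk (gexp I) (Some z) = (if z \<in> I then 1 else 0)"
  using assms by (simp_all add: gexp_def lookup_add lookup_sum lookup_single when_def)

lemma Bf_gexp:
  assumes "finite I"
  shows "Bf (gexp I) u = (case u of MInf \<Rightarrow> 1 | Elt z \<Rightarrow> (if z \<in> I then 1 else 0) | PInf \<Rightarrow> 0)"
  using assms by (cases u) (simp_all add: lookup_gexp)

lemma inS_gexp:
  assumes "finite P" "I \<in> poset_ideals P le"
  shows "inS P le (gexp I)"
proof -
  have I: "I \<subseteq> P" "\<And>x y. x \<in> I \<Longrightarrow> y \<in> P \<Longrightarrow> le y x \<Longrightarrow> y \<in> I"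
    using assms(2) unfolding poset_ideals_def by auto
  have fI: "finite I" using I(1) assms(1) finite_subset by blast
  show ?thesis unfolding inS_def
  proof (intro conjI allI impI ballI)
    fix z assume "z \<notin> P" then show "lk (gexp I) (Some z) = 0"
      using I(1) fI by (auto simp: lookup_gexp)
  next
    fix u v assume uv: "u \<in> P_bar P" "v \<in> P_bar P" "le_bar le u v"
    show "Bf (gexp I) v \<le> Bf (gexp I) u"
      using uv I(2) by (cases u; cases v) (auto simp: lookup_gexp[OF fI] P_bar_def)
  qed
qed

lemma keys_mult_sub:
  "ks x \<subseteq> A \<Longrightarrow> ks y \<subseteq> B \<Longrightarrow> ks (x * y) \<subseteq> {a + b |a b. a \<in> A \<and> b \<in> B}"
  using keys_mult[of x y] by blast

lemma hibi_ring_keys: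
  assumes "finite P" "x \<in> (hibi_ring P le :: ('a,'k::field) mpoly set)"
  shows "ks x \<subseteq> {\<alpha>. inS P le \<alpha>}"
  using assms(2) unfolding hibi_ring_def
proof (induction rule: gen_alg.induct)
  case (base b)
  then show ?case by (auto simp: inS_zero split: if_splits)
next
  case (gen g)
  then obtain I where "I \<in> poset_ideals P le" "g = sg (gexp I) 1"
    by (auto simp: hibi_gens_def hibi_gen_gexp)
  then show ?case using inS_gexp[OF assms(1)] by auto
next
  case zero
  then show ?case by simp
next
  case one
  then show ?case by (simp add: inS_zero)
next
  case (uminus x)
  then show ?case by simp
next
  case (add x y)
  then show ?case using keys_add[of x y] by blast
next
  case (mult x y)
  then show ?case using keys_mult_sub[OF mult.IH] inS_add by blast
qed

lemma single_in_R1: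
  assumes "finite P"
  shows "lk \<alpha> None = n \<Longrightarrow> inS P le \<alpha> \<Longrightarrow> sg \<alpha> 1 \<in> (hibi_ring P le :: ('a,'k::field) mpoly set)"
proof (induction n arbitrary: \<alpha>)
  case 0
  have "\<alpha> = 0"
  proof (rule poly_mapping_eqI)
    fix w show "lk \<alpha> w = lk 0 w"
    proof (cases w)
      case None then show ?thesis using 0 by simp
    next
      case (Some z)
      show ?thesis
      proof (cases "z \<in> P")
        case True
        then have "Bf \<alpha> (Elt z) \<le> Bf \<alpha> MInf" using 0(2) unfolding inS_def P_bar_def by auto
        then show ?thesis using 0(1) Some by simp
      next
        case False then show ?thesis using 0(2) Some unfolding inS_def by simp
      qed
    qed
  qed
  then show ?case unfolding hibi_ring_def by (simp add: gen_alg.one)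
next
  case (Suc n)
  define I where "I = {z \<in> P. Suc n \<le> lk \<alpha> (Some z)}"
  have bound: "Bf \<alpha> u \<le> Suc n" if "u \<in> P_bar P" for u
    using Suc.prems that unfolding inS_def P_bar_def by (metis Bf_simps(1) UnCI insertCI le_bar.simps(1))
  have Iid: "I \<in> poset_ideals P le"
  proof -
    have "y \<in> I" if "x \<in> I" "y \<in> P" "le y x" for x y
    proof -
      have "Bf \<alpha> (Elt x) \<le> Bf \<alpha> (Elt y)" using Suc.prems(2) that unfolding inS_def P_bar_def I_def by auto
      then show ?thesis using that unfolding I_def by auto
    qed
    then show ?thesis unfolding poset_ideals_def I_def by auto
  qed
  have fI: "finite I" using assms unfolding I_def by simp
  define \<beta> where "\<beta> = to_exp P (\<lambda>u. min (Bf \<alpha> u) n)"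
  have beta_S: "inS P le \<beta>" unfolding \<beta>_def
    by (rule inS_to_exp[OF assms]) (use Suc.prems(2) in \<open>auto simp: inS_def min.coboundedI1\<close>)
  have beta_deg: "lk \<beta> None = n" unfolding \<beta>_def using assms Suc.prems(1) by simp
  have split: "\<alpha> = gexp I + \<beta>"
  proof (rule poly_mapping_eqI)
    fix w show "lk \<alpha> w = lk (gexp I + \<beta>) w"
    proof (cases w)
      case None then show ?thesis using Suc.prems(1) by (simp add: lookup_add lookup_gexp[OF fI] \<beta>_def assms)
    next
      case (Some z)
      show ?thesis
      proof (cases "z \<in> P")
        case True
        have "Bf \<alpha> (Elt z) \<le> Suc n" using bound[of "Elt z"] True unfolding P_bar_def by blast
        then show ?thesis using Some True
          by (simp add: lookup_add lookup_gexp[OF fI] \<beta>_def assms) (auto simp: I_def)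
      next
        case False
        have "z \<notin> I" using False I_def by simp
        then show ?thesis using Suc.prems(2) Some False
          by (simp add: lookup_add lookup_gexp[OF fI] \<beta>_def assms inS_def)
      qed
    qed
  qed
  have "sg (gexp I) (1::'k) \<in> hibi_ring P le"
    unfolding hibi_ring_def by (rule gen_alg.gen) (use Iid in \<open>auto simp: hibi_gens_def hibi_gen_gexp\<close>)
  moreover have "sg \<beta> (1::'k) \<in> hibi_ring P le" using Suc.IH beta_S beta_deg by blast
  ultimately have "sg (gexp I) (1::'k) * sg \<beta> 1 \<in> hibi_ring P le"
    unfolding hibi_ring_def by (rule gen_alg.mult)
  then show ?case using split by (simp add: mult_single)
qed

lemma single_in_R:
  assumes "finite P" "inS P le \<alpha>"
  shows "sg \<alpha> c \<in> (hibi_ring P le :: ('a,'k::field) mpoly set)"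
proof -
  have "sg \<alpha> (1::'k) \<in> hibi_ring P le" using single_in_R1[OF assms(1) refl assms(2)] .
  moreover have "sg 0 c \<in> (hibi_ring P le :: ('a,'k::field) mpoly set)"
    unfolding hibi_ring_def by (rule gen_alg.base) simp
  ultimately have "sg 0 c * sg \<alpha> 1 \<in> (hibi_ring P le :: ('a,'k::field) mpoly set)"
    unfolding hibi_ring_def using gen_alg.mult by blast
  then show ?thesis by (simp add: mult_single)
qed

lemma max_keys:
  assumes "finite P" "x \<in> (hibi_max P le :: ('a,'k::field) mpoly set)"
  shows "ks x \<subseteq> {\<alpha>. inS P le \<alpha> \<and> 1 \<le> lk \<alpha> None}"
  using assms(2) unfolding hibi_max_def
proof (induction rule: ideal_gen.induct)
  case zero
  then show ?case by simp
next
  case (lin r g)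
  then obtain I where I: "I \<in> poset_ideals P le" "g = sg (gexp I) 1"
    by (auto simp: hibi_gens_def hibi_gen_gexp)
  have fI: "finite I" using I(1) assms(1) unfolding poset_ideals_def by (auto intro: finite_subset)
  have "ks g \<subseteq> {\<alpha>. inS P le \<alpha> \<and> 1 \<le> lk \<alpha> None}"
    using I inS_gexp[OF assms(1) I(1)] lookup_gexp[OF fI] by auto
  then show ?case using keys_mult_sub[OF hibi_ring_keys[OF assms(1) lin(1)]] inS_add
    by (fastforce simp: lookup_add)
next
  case (add x y)
  then show ?case using keys_add[of x y] by blast
qed

lemma prods_keys:
  assumes "finite P"
  shows "x \<in> prods (hibi_max P le :: ('a,'k::field) mpoly set) n \<Longrightarrow> ks x \<subseteq> {\<alpha>. inS P le \<alpha> \<and> n \<le> lk \<alpha> None}"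
proof (induction n arbitrary: x)
  case 0
  then show ?case by (simp add: inS_zero)
next
  case (Suc n)
  then obtain a b where ab: "x = a * b" "a \<in> hibi_max P le" "b \<in> prods (hibi_max P le) n" by auto
  show ?case using keys_mult_sub[OF max_keys[OF assms ab(2)] Suc.IH[OF ab(3)]] inS_add ab(1)
    by (fastforce simp: lookup_add)
qed

lemma ideal_pow_keys:
  assumes "finite P" "x \<in> ideal_pow (hibi_ring P le) (hibi_max P le :: ('a,'k::field) mpoly set) N"
  shows "ks x \<subseteq> {\<alpha>. inS P le \<alpha> \<and> N \<le> lk \<alpha> None}"
  using assms(2) unfolding ideal_pow_def
proof (induction rule: ideal_gen.induct)
  case zero
  then show ?case by simp
next
  case (lin r g)
  show ?case using keys_mult_sub[OF hibi_ring_keys[OF assms(1) lin(1)] prods_keys[OF assms(1) lin(2)]] inS_add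
    by (fastforce simp: lookup_add)
next
  case (add x y)
  then show ?case using keys_add[of x y] by blast
qed

lemma arith_aux: "(q::nat) * d \<le> b \<Longrightarrow> q * (2 * f) + b = q * (f + d) + (b + q * f - q * d)"
proof -
  assume h: "q * d \<le> b"
  have "q * (2 * f) = 2 * (q * f)" "q * (f + d) = q * f + q * d" by (simp_all add: algebra_simps)
  then show ?thesis using h by linarith
qed

lemma phi_kill:
  fixes \<phi> :: "('a,'k::field) mpoly \<Rightarrow> ('a,'k) mpoly"
  assumes fin: "finite P" and pos: "is_poset P le"
    and phiR: "\<forall>x\<in>hibi_ring P le. \<phi> x \<in> hibi_ring P le"
    and phiL: "\<forall>r\<in>hibi_ring P le. \<forall>s\<in>hibi_ring P le. \<phi> (r ^ q * s) = r * \<phi> s"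
    and \<alpha>S: "inS P le \<alpha>"
    and uQ: "u \<in> P_bar P" and vQ: "v \<in> P_bar P" and Luv: "le_bar le u v" and uv: "u \<noteq> v"
    and cover: "\<forall>z\<in>P_bar P. le_bar le u z \<and> le_bar le z v \<longrightarrow> z = u \<or> z = v"
    and big: "Bf \<alpha> v + q \<le> Bf \<alpha> u"
  shows "lk (\<phi> (sg \<alpha> c)) 0 = 0"
proof -
  define Q where "Q = P_bar P"
  define L where "L = le_bar le"
  have fQ: "finite Q" using fin unfolding Q_def P_bar_def by simp
  note po = poset_bar[OF pos, folded Q_def L_def, unfolded is_poset_def]
  have refl: "L x x" if "x \<in> Q" for x using po that by blast
  have anti: "x = y" if "x \<in> Q" "y \<in> Q" "L x y" "L y x" for x y using po that by blast
  have trans: "L x z" if "x \<in> Q" "y \<in> Q" "z \<in> Q" "L x y" "L y z" for x y z using po that by blast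
  have Ltop: "L x PInf" for x unfolding L_def by (cases x) auto
  have PInfQ: "PInf \<in> Q" unfolding Q_def P_bar_def by simp
  have uQ': "u \<in> Q" and vQ': "v \<in> Q" and Luv': "L u v" using uQ vQ Luv unfolding Q_def L_def by auto
  have cover': "\<And>z. z \<in> Q \<Longrightarrow> L u z \<Longrightarrow> L z v \<Longrightarrow> z = u \<or> z = v" using cover unfolding Q_def L_def by auto
  have uP: "u \<noteq> PInf" using anti[OF uQ' PInfQ] Luv' uv Ltop[of v]
    by (metis L_def le_bar.simps(5))
  define le' where "le' z z' \<longleftrightarrow> L z z' \<or> (L z v \<and> L u z')" for z z'
  have le'_refl: "le' z z" if "z \<in> Q" for z using refl[OF that] unfolding le'_def by simp
  have le'_L: "L z z' \<Longrightarrow> le' z z'" for z z' unfolding le'_def by simp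
  have le'_trans: "le' x z" if "x \<in> Q" "y \<in> Q" "z \<in> Q" "le' x y" "le' y z" for x y z
    using that trans[of x y z] trans[of x y v] trans[of u y z] uQ' vQ' unfolding le'_def by blast
  have uv': "le' u v" "le' v u" using Luv' refl[OF uQ'] refl[OF vQ'] unfolding le'_def by auto
  define S where "S z = {w \<in> Q - {v}. le' z w \<and> \<not> le' w z}" for z
  define F where "F z = card (S z)" for z
  have fS: "finite (S z)" for z using fQ unfolding S_def by simp
  have P2: "F z' \<le> F z" if "z \<in> Q" "z' \<in> Q" "L z z'" for z z'
  proof -
    have "S z' \<subseteq> S z" unfolding S_def using le'_trans[OF that(1,2)] le'_trans[of _ z z'] le'_L[OF that(3)] that
      by blast
    then show ?thesis unfolding F_def by (simp add: card_mono fS)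
  qed
  have P3: "Suc (F z') \<le> F z" if "z \<in> Q" "z' \<in> Q" "L z z'" "\<not> le' z' z" for z z'
  proof -
    define e where "e = (if z' = v then u else z')"
    have sub: "S z' \<subseteq> S z" unfolding S_def using le'_trans[OF that(1,2)] le'_trans[of _ z z'] le'_L[OF that(3)] that
      by blast
    have eS: "e \<in> S z"
    proof (cases "z' = v")
      case True
      then have "le' z u" using that(3) refl[OF uQ'] unfolding le'_def by simp
      moreover have "\<not> le' u z" using le'_trans[OF vQ' uQ' that(1) uv'(2)] that(4) True by blast
      ultimately show ?thesis using True uQ' uv unfolding S_def e_def by simp
    next
      case False
      then show ?thesis using that le'_L unfolding S_def e_def by simp
    qed
    have eN: "e \<notin> S z'"
    proof (cases "z' = v")
      case True then show ?thesis using uv'(1) unfolding S_def e_def by simp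
    next
      case False then show ?thesis using le'_refl[OF that(2)] unfolding S_def e_def by simp
    qed
    have "insert e (S z') \<subseteq> S z" using sub eS by blast
    then have "card (insert e (S z')) \<le> card (S z)" by (simp add: card_mono fS)
    then show ?thesis unfolding F_def using eN fS by simp
  qed
  have P1: "F u = F v"
  proof -
    have "S u = S v" unfolding S_def
      using le'_trans[OF uQ' vQ'] le'_trans[OF vQ' uQ'] le'_trans[of _ u v] le'_trans[of _ v u] uv' uQ' vQ'
      by blast
    then show ?thesis unfolding F_def by simp
  qed
  have FP: "F PInf = 0"
  proof -
    have "S PInf = {}" unfolding S_def le'_def using Ltop by auto
    then show ?thesis unfolding F_def by simp
  qed
  have notle'_u: "\<not> le' z' u" if "z' \<in> Q" "L u z'" "z' \<noteq> u" "z' \<noteq> v" for z'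
    using anti[OF that(1) uQ'] cover'[OF that(1)] that refl[OF uQ'] unfolding le'_def by blast
  have notle'_u2: "\<not> le' u z" if "z \<in> Q" "L z u" "z \<noteq> u" for z
    using anti[OF that(1) uQ'] that unfolding le'_def by blast
  define dx where "dx z = (if z = u then 1 else 0 :: nat)" for z
  define s where "s = to_exp P (\<lambda>z. 2 * F z)"
  define s2 where "s2 = to_exp P (\<lambda>z. F z + dx z)"
  define w2 where "w2 = to_exp P (\<lambda>z. Bf \<alpha> z + q * F z - q * dx z)"
  have sS: "inS P le s" unfolding s_def
    by (rule inS_to_exp[OF fin]) (use FP P2 in \<open>auto simp: Q_def L_def\<close>)
  have s2S: "inS P le s2" unfolding s2_def
  proof (rule inS_to_exp[OF fin])
    show "F PInf + dx PInf = 0" using FP uP unfolding dx_def by simp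
    fix z z' assume h: "z \<in> P_bar P" "z' \<in> P_bar P" "le_bar le z z'"
    then have h': "z \<in> Q" "z' \<in> Q" "L z z'" unfolding Q_def L_def by auto
    show "F z' + dx z' \<le> F z + dx z"
    proof (cases "z' = u \<and> z \<noteq> u")
      case True
      then show ?thesis using P3[OF h'] notle'_u2[OF h'(1)] h'(3) unfolding dx_def by auto
    next
      case False
      then show ?thesis using P2[OF h'] unfolding dx_def by auto
    qed
  qed
  have Bfu: "Bf \<alpha> u \<ge> q" using big by simp
  have \<alpha>mono: "Bf \<alpha> z' \<le> Bf \<alpha> z" if "z \<in> Q" "z' \<in> Q" "L z z'" for z z'
    using \<alpha>S that unfolding inS_def Q_def L_def by blast
  have w2S: "inS P le w2" unfolding w2_def
  proof (rule inS_to_exp[OF fin])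
    show "Bf \<alpha> PInf + q * F PInf - q * dx PInf = 0" using FP uP unfolding dx_def by simp
    fix z z' assume h: "z \<in> P_bar P" "z' \<in> P_bar P" "le_bar le z z'"
    then have h': "z \<in> Q" "z' \<in> Q" "L z z'" unfolding Q_def L_def by auto
    have m1: "q * F z' \<le> q * F z" using P2[OF h'] by simp
    show "Bf \<alpha> z' + q * F z' - q * dx z' \<le> Bf \<alpha> z + q * F z - q * dx z"
    proof (cases "z = u")
      case True
      note zu = True
      show ?thesis
      proof (cases "z' = v")
        case True
        then show ?thesis using zu P1 big uv unfolding dx_def by simp
      next
        case False
        show ?thesis
        proof (cases "z' = u")
          case True then show ?thesis using zu by simp
        next
          case False
          have "Suc (F z') \<le> F z" using P3[OF h'] notle'_u[OF h'(2)] h'(3) zu False \<open>z' \<noteq> v\<close> by simp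
          then have "q * F z' + q \<le> q * F z"
            by (metis add.commute mult_Suc_right mult_le_mono2)
          then show ?thesis using \<alpha>mono[OF h'] zu False Bfu unfolding dx_def by simp
        qed
      qed
    next
      case False
      have "Bf \<alpha> z' + q * F z' \<le> Bf \<alpha> z + q * F z" using \<alpha>mono[OF h'] m1 by (simp add: add_mono)
      then show ?thesis using False unfolding dx_def by auto
    qed
  qed
  have ident: "(\<Sum>i<q. s) + \<alpha> = (\<Sum>i<q. s2) + w2"
  proof -
    have "(\<Sum>i<q. s) + \<alpha> = to_exp P (\<lambda>z. q * (2 * F z) + Bf \<alpha> z)"
    proof -
      have "(\<Sum>i<q. s) + \<alpha> = to_exp P (\<lambda>z. q * (2 * F z)) + to_exp P (Bf \<alpha>)"
        unfolding s_def to_exp_Bf[OF fin \<alpha>S] sum_const_to_exp[OF fin] ..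
      then show ?thesis by (simp only: to_exp_add[OF fin])
    qed
    also have "\<dots> = to_exp P (\<lambda>z. q * (F z + dx z) + (Bf \<alpha> z + q * F z - q * dx z))"
    proof (rule to_exp_eqI[OF fin])
      have hh: "q * dx z \<le> Bf \<alpha> z" for z using Bfu unfolding dx_def by auto
      show "q * (2 * F MInf) + Bf \<alpha> MInf = q * (F MInf + dx MInf) + (Bf \<alpha> MInf + q * F MInf - q * dx MInf)"
        by (rule arith_aux[OF hh])
      show "\<And>z. z \<in> P \<Longrightarrow> q * (2 * F (Elt z)) + Bf \<alpha> (Elt z) =
          q * (F (Elt z) + dx (Elt z)) + (Bf \<alpha> (Elt z) + q * F (Elt z) - q * dx (Elt z))"
        by (rule arith_aux[OF hh])
    qed
    also have "\<dots> = (\<Sum>i<q. s2) + w2"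
      unfolding s2_def w2_def by (simp add: sum_const_to_exp[OF fin] to_exp_add[OF fin])
    finally show ?thesis .
  qed
  let ?R = "hibi_ring P le :: ('a,'k) mpoly set"
  have R1: "sg \<alpha> c \<in> ?R" "sg w2 c \<in> ?R" "sg s 1 \<in> ?R" "sg s2 1 \<in> ?R"
    using single_in_R[OF fin] \<alpha>S w2S sS s2S by blast+
  have "sg s 1 * \<phi> (sg \<alpha> c) = \<phi> ((sg s 1)^q * sg \<alpha> c)" using phiL R1 by simp
  also have "\<dots> = \<phi> (sg ((\<Sum>i<q. s) + \<alpha>) c)" by (simp add: single_pow mult_single)
  also have "\<dots> = \<phi> ((sg s2 1)^q * sg w2 c)" by (simp add: single_pow mult_single ident)
  also have "\<dots> = sg s2 1 * \<phi> (sg w2 c)" using phiL R1 by simp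
  finally have eq: "sg s 1 * \<phi> (sg \<alpha> c) = sg s2 1 * \<phi> (sg w2 c)" .
  show ?thesis
  proof (rule ccontr)
    assume ne: "lk (\<phi> (sg \<alpha> c)) 0 \<noteq> 0"
    have "lk (sg s 1 * \<phi> (sg \<alpha> c)) (s + 0) = lk (\<phi> (sg \<alpha> c)) 0" by (rule lookup_single_mult)
    then have "s \<in> ks (sg s2 1 * \<phi> (sg w2 c))" using ne eq by (simp add: in_keys_iff)
    moreover have "ks (\<phi> (sg w2 c)) \<subseteq> {\<alpha>. inS P le \<alpha>}"
      using hibi_ring_keys[OF fin] phiR R1 by blast
    ultimately obtain \<delta> where d: "s = s2 + \<delta>" "inS P le \<delta>"
      using keys_mult[of "sg s2 (1::'k)" "\<phi> (sg w2 c)"] by force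
    have "Bf s u = Bf s2 u + Bf \<delta> u" "Bf s v = Bf s2 v + Bf \<delta> v" using d(1) by simp_all
    moreover have "Bf s u = 2 * F u" "Bf s v = 2 * F v" unfolding s_def
      using Bf_to_exp[OF fin uQ, of "\<lambda>z. 2 * F z"] Bf_to_exp[OF fin vQ, of "\<lambda>z. 2 * F z"] FP by simp_all
    moreover have "Bf s2 u = F u + 1" "Bf s2 v = F v" unfolding s2_def
      using Bf_to_exp[OF fin uQ, of "\<lambda>z. F z + dx z"] Bf_to_exp[OF fin vQ, of "\<lambda>z. F z + dx z"] FP uP uv
      unfolding dx_def by simp_all
    moreover have "Bf \<delta> v \<le> Bf \<delta> u" using d(2) uQ vQ Luv unfolding inS_def by blast
    ultimately show False using P1 by simp
  qed
qed

lemma chain_bound: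
  fixes B :: "'b \<Rightarrow> nat"
  assumes po: "is_poset Q L"
  shows "finite C \<Longrightarrow> C \<subseteq> Q \<Longrightarrow> (\<forall>x\<in>C. \<forall>y\<in>C. L x y \<or> L y x) \<Longrightarrow> b \<in> C \<Longrightarrow> t \<in> C
    \<Longrightarrow> (\<forall>x\<in>C. L b x) \<Longrightarrow> (\<forall>x\<in>C. L x t)
    \<Longrightarrow> (\<forall>x\<in>C. \<forall>y\<in>C. L x y \<and> x \<noteq> y \<and> (\<forall>w\<in>C. L x w \<and> L w y \<longrightarrow> w = x \<or> w = y) \<longrightarrow> B x \<le> B y + K)
    \<Longrightarrow> B b \<le> B t + (card C - 1) * K"
proof (induction "card C" arbitrary: C t rule: less_induct)
  case less
  note fC = less.prems(1) and CQ = less.prems(2) and tot = less.prems(3) and bC = less.prems(4)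
    and tC = less.prems(5) and bmin = less.prems(6) and tmax = less.prems(7) and step = less.prems(8)
  have anti: "x = y" if "x \<in> Q" "y \<in> Q" "L x y" "L y x" for x y
    using po that unfolding is_poset_def by blast
  have trans: "L x z" if "x \<in> Q" "y \<in> Q" "z \<in> Q" "L x y" "L y z" for x y z
    using po that unfolding is_poset_def by blast
  show ?case
  proof (cases "t = b")
    case True then show ?thesis by simp
  next
    case False
    define C' where "C' = C - {t}"
    have bC': "b \<in> C'" using bC False unfolding C'_def by simp
    have fC': "finite C'" using fC unfolding C'_def by simp
    define h where "h x = card {y \<in> C'. L y x}" for x
    define m where "m = Max (h ` C')"
    have "m \<in> h ` C'" unfolding m_def using fC' bC' by (intro Max_in) auto
    then obtain t' where t'C: "t' \<in> C'" and ht': "h t' = m" by auto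
    have hmax: "h x \<le> h t'" if "x \<in> C'" for x using that ht' fC' unfolding m_def by simp
    have t'max: "L x t'" if "x \<in> C'" for x
    proof (rule ccontr)
      assume nx: "\<not> L x t'"
      have xQ: "x \<in> Q" and t'Q: "t' \<in> Q" using that t'C CQ unfolding C'_def by auto
      have Lt'x: "L t' x" using tot that t'C nx unfolding C'_def by blast
      have "{y \<in> C'. L y t'} \<subset> {y \<in> C'. L y x}"
      proof
        show "{y \<in> C'. L y t'} \<subseteq> {y \<in> C'. L y x}"
          using trans[OF _ t'Q xQ _ Lt'x] CQ unfolding C'_def by blast
        have "L x x" using po xQ unfolding is_poset_def by blast
        then show "{y \<in> C'. L y t'} \<noteq> {y \<in> C'. L y x}" using that nx by blast
      qed
      then have "h t' < h x" unfolding h_def using fC' by (intro psubset_card_mono) auto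
      then show False using hmax[OF that] by simp
    qed
    have card': "card C' = card C - 1" "card C' < card C"
    proof -
      have "card C > 0" using fC tC card_gt_0_iff by blast
      then show "card C' = card C - 1" "card C' < card C" using fC tC unfolding C'_def by auto
    qed
    have IH: "B b \<le> B t' + (card C' - 1) * K"
    proof (rule less.hyps[OF card'(2) fC'])
      show "C' \<subseteq> Q" using CQ unfolding C'_def by auto
      show "\<forall>x\<in>C'. \<forall>y\<in>C'. L x y \<or> L y x" using tot unfolding C'_def by auto
      show "b \<in> C'" "t' \<in> C'" by (fact bC', fact t'C)
      show "\<forall>x\<in>C'. L b x" using bmin unfolding C'_def by auto
      show "\<forall>x\<in>C'. L x t'" using t'max by blast
      show "\<forall>x\<in>C'. \<forall>y\<in>C'. L x y \<and> x \<noteq> y \<and> (\<forall>w\<in>C'. L x w \<and> L w y \<longrightarrow> w = x \<or> w = y) \<longrightarrow> B x \<le> B y + K"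
      proof (intro ballI impI)
        fix x y assume xy: "x \<in> C'" "y \<in> C'" "L x y \<and> x \<noteq> y \<and> (\<forall>w\<in>C'. L x w \<and> L w y \<longrightarrow> w = x \<or> w = y)"
        have "\<forall>w\<in>C. L x w \<and> L w y \<longrightarrow> w = x \<or> w = y"
        proof (intro ballI impI)
          fix w assume w: "w \<in> C" "L x w \<and> L w y"
          show "w = x \<or> w = y"
          proof (cases "w = t")
            case True
            then have "y = t" using anti[of t y] w tmax xy CQ tC unfolding C'_def by auto
            then show ?thesis using xy unfolding C'_def by simp
          next
            case False then show ?thesis using xy w unfolding C'_def by auto
          qed
        qed
        then show "B x \<le> B y + K" using step xy unfolding C'_def by auto
      qed
    qed
    have t't: "B t' \<le> B t + K"
    proof -
      have "t' \<noteq> t" using t'C unfolding C'_def by simp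
      moreover have "L t' t" using tmax t'C unfolding C'_def by auto
      moreover have "\<forall>w\<in>C. L t' w \<and> L w t \<longrightarrow> w = t' \<or> w = t"
      proof (intro ballI impI)
        fix w assume w: "w \<in> C" "L t' w \<and> L w t"
        show "w = t' \<or> w = t"
        proof (cases "w = t")
          case False
          then have "L w t'" using t'max w unfolding C'_def by auto
          then show ?thesis using anti[of w t'] w t'C CQ unfolding C'_def by auto
        qed simp
      qed
      ultimately show ?thesis using step t'C tC unfolding C'_def by auto
    qed
    have "card C \<ge> 2"
    proof -
      have "{b, t} \<subseteq> C" using bC tC by auto
      then have "card {b, t} \<le> card C" using fC card_mono by blast
      then show ?thesis using False by simp
    qed
    then obtain n where n: "card C = Suc (Suc n)" by (metis add_2_eq_Suc le_Suc_ex)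
    have "(card C' - 1) * K + K = (card C - 1) * K" using card'(1) n by simp
    then show ?thesis using IH t't by linarith
  qed
qed

definition emb :: "'a set \<Rightarrow> 'a ext set" where
  "emb D = insert MInf (insert PInf (Elt ` D))"

lemma emb_chain:
  assumes "is_chain P le D"
  shows "is_chain (P_bar P) (le_bar le) (emb D)"
  using assms unfolding is_chain_def emb_def P_bar_def
  apply (intro conjI)
  apply blast
  apply (intro ballI)
  subgoal for x y by (cases x; cases y) auto
  done

lemma emb_max:
  assumes "is_max_chain P le D"
  shows "is_max_chain (P_bar P) (le_bar le) (emb D)"
proof -
  have ch: "is_chain P le D" using assms unfolding is_max_chain_def by simp
  have "E = emb D" if E: "is_chain (P_bar P) (le_bar le) E" "emb D \<subseteq> E" for E
  proof -
    define D' where "D' = {z. Elt z \<in> E}"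
    have "is_chain P le D'"
      using E(1) unfolding is_chain_def D'_def P_bar_def by fastforce
    moreover have "D \<subseteq> D'" using E(2) unfolding D'_def emb_def by auto
    ultimately have "D' = D" using assms unfolding is_max_chain_def by blast
    then have "E \<subseteq> emb D" unfolding emb_def D'_def
      apply (intro subsetI)
      subgoal for x by (cases x) auto
      done
    then show ?thesis using E(2) by blast
  qed
  then show ?thesis using emb_chain[OF ch] unfolding is_max_chain_def by blast
qed

lemma max_chain_bar_ends:
  assumes "is_max_chain (P_bar P) (le_bar le) C"
  shows "MInf \<in> C" "PInf \<in> C"
proof -
  have ch: "C \<subseteq> P_bar P" "\<forall>x\<in>C. \<forall>y\<in>C. le_bar le x y \<or> le_bar le y x"
    using assms unfolding is_max_chain_def is_chain_def by auto
  have top: "le_bar le x PInf" for x by (cases x) auto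
  have "is_chain (P_bar P) (le_bar le) (insert MInf C)"
    using ch unfolding is_chain_def P_bar_def by auto
  then show "MInf \<in> C" using assms unfolding is_max_chain_def by blast
  have "is_chain (P_bar P) (le_bar le) (insert PInf C)"
    using ch top unfolding is_chain_def P_bar_def by auto
  then show "PInf \<in> C" using assms unfolding is_max_chain_def by blast
qed

lemma max_chain_bar_emb:
  assumes "is_max_chain (P_bar P) (le_bar le) C"
  shows "\<exists>D. is_max_chain P le D \<and> C = emb D"
proof -
  define D where "D = {z. Elt z \<in> C}"
  have ch: "C \<subseteq> P_bar P" "\<forall>x\<in>C. \<forall>y\<in>C. le_bar le x y \<or> le_bar le y x"
    using assms unfolding is_max_chain_def is_chain_def by auto
  have CD: "C = emb D"
  proof
    show "C \<subseteq> emb D" unfolding emb_def D_def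
      apply (intro subsetI)
      subgoal for x by (cases x) auto
      done
    show "emb D \<subseteq> C" using max_chain_bar_ends[OF assms] unfolding emb_def D_def by auto
  qed
  have Dch: "is_chain P le D"
    using ch unfolding is_chain_def D_def P_bar_def by fastforce
  have "D' = D" if D': "is_chain P le D'" "D \<subseteq> D'" for D'
  proof -
    have "emb D' = C" using assms emb_chain[OF D'(1)] D'(2) CD unfolding is_max_chain_def emb_def by blast
    then show ?thesis using D'(2) CD unfolding emb_def by auto
  qed
  then show ?thesis using Dch CD unfolding is_max_chain_def by blast
qed

lemma card_emb: "finite D \<Longrightarrow> card (emb D) = card D + 2"
proof -
  assume f: "finite D"
  have "card (Elt ` D) = card D" by (rule card_image) (auto simp: inj_on_def)
  moreover have "PInf \<notin> Elt ` D" "MInf \<notin> insert PInf (Elt ` D)" by auto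
  ultimately show ?thesis unfolding emb_def using f by simp
qed

lemma max_chain_exists:
  assumes "finite P"
  shows "\<exists>D. is_max_chain P le D"
proof -
  define CH where "CH = {D. is_chain P le D}"
  have fCH: "finite CH" unfolding CH_def is_chain_def using assms
    by (rule_tac finite_subset[of _ "Pow P"]) auto
  have ne: "{} \<in> CH" unfolding CH_def is_chain_def by simp
  define m where "m = Max (card ` CH)"
  have "m \<in> card ` CH" unfolding m_def using fCH ne by (intro Max_in) auto
  then obtain D where D: "D \<in> CH" "card D = m" by auto
  have "E = D" if "is_chain P le E" "D \<subseteq> E" for E
  proof -
    have "E \<in> CH" using that unfolding CH_def by simp
    then have "card E \<le> card D" using D fCH unfolding m_def by simp
    moreover have "finite E" using that assms unfolding is_chain_def by (auto intro: finite_subset)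
    ultimately show ?thesis using that(2) card_subset_eq[of E D] card_mono[of E D] by (metis antisym card_seteq)
  qed
  then show ?thesis using D unfolding is_max_chain_def CH_def by blast
qed

lemma max_chain_cover:
  assumes pos: "is_poset P le" and C: "is_max_chain (P_bar P) (le_bar le) C"
    and xy: "x \<in> C" "y \<in> C" "\<forall>w\<in>C. le_bar le x w \<and> le_bar le w y \<longrightarrow> w = x \<or> w = y"
    and z: "z \<in> P_bar P" "le_bar le x z" "le_bar le z y"
  shows "z = x \<or> z = y"
proof -
  note po = poset_bar[OF pos, unfolded is_poset_def]
  have trans: "le_bar le a c" if "a \<in> P_bar P" "b \<in> P_bar P" "c \<in> P_bar P" "le_bar le a b" "le_bar le b c" for a b c
    using po that by blast
  have ch: "C \<subseteq> P_bar P" "\<forall>a\<in>C. \<forall>b\<in>C. le_bar le a b \<or> le_bar le b a"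
    using C unfolding is_max_chain_def is_chain_def by auto
  have comp: "le_bar le c z \<or> le_bar le z c" if "c \<in> C" for c
  proof -
    have cQ: "c \<in> P_bar P" using that ch by auto
    have xQ: "x \<in> P_bar P" and yQ: "y \<in> P_bar P" using xy ch by auto
    show ?thesis
    proof (cases "le_bar le c x")
      case True then show ?thesis using trans[OF cQ xQ z(1) _ z(2)] by blast
    next
      case False
      then have cx: "le_bar le x c" using ch that xy by blast
      show ?thesis
      proof (cases "le_bar le y c")
        case True then show ?thesis using trans[OF z(1) yQ cQ z(3)] by blast
      next
        case False
        then have "le_bar le c y" using ch that xy by blast
        then have "c = x \<or> c = y" using xy(3) that cx by blast
        then show ?thesis using z by blast
      qed
    qed
  qed
  have "is_chain (P_bar P) (le_bar le) (insert z C)"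
    using ch comp z(1) po unfolding is_chain_def by blast
  then have "z \<in> C" using C unfolding is_max_chain_def by blast
  then show ?thesis using xy(3) z by blast
qed

lemma poly_expand: "d = (\<Sum>\<alpha>\<in>ks d. sg \<alpha> (lk d \<alpha>))"
proof (rule poly_mapping_eqI)
  fix w
  have "lk (\<Sum>\<alpha>\<in>ks d. sg \<alpha> (lk d \<alpha>)) w = (\<Sum>\<alpha>\<in>ks d. if \<alpha> = w then lk d \<alpha> else 0)"
    by (simp add: lookup_sum lookup_single when_def eq_commute)
  also have "\<dots> = lk d w" by (simp add: in_keys_iff)
  finally show "lk d w = lk (\<Sum>\<alpha>\<in>ks d. sg \<alpha> (lk d \<alpha>)) w" by simp
qed

lemma main_bound:
  fixes P :: "'a set" and le and p :: nat
  assumes pr: "prime p" and fin: "finite P" and pos: "is_poset P le"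
    and C: "is_max_chain (P_bar P) (le_bar le) C" and t0: "t \<ge> 0"
    and Fp: "F_pure (hibi_ring P le :: ('a,'k::field) mpoly set) (hibi_max P le) p t"
  shows "t \<le> real (card C) - 1"
proof -
  let ?R = "hibi_ring P le :: ('a,'k) mpoly set"
  let ?m = "hibi_max P le :: ('a,'k) mpoly set"
  obtain e0 where e0: "\<forall>e\<ge>e0. \<exists>d \<in> ideal_pow ?R ?m (nat \<lceil>t * (real (p ^ e) - 1)\<rceil>). frob_splits ?R (p ^ e) d"
    using Fp unfolding F_pure_def by blast
  define e where "e = max e0 1"
  define q where "q = p ^ e"
  have p2: "p \<ge> 2" using pr by (simp add: prime_ge_2_nat)
  have "p ^ 1 \<le> p ^ e" unfolding e_def using p2 by (intro power_increasing) auto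
  then have q2: "q \<ge> 2" using p2 unfolding q_def by simp
  define N where "N = nat \<lceil>t * (real q - 1)\<rceil>"
  obtain d where dI: "d \<in> ideal_pow ?R ?m N" and fs: "frob_splits ?R q d"
    using e0[rule_format, of e] unfolding N_def q_def e_def by auto
  obtain \<phi> where dR: "d \<in> ?R" and phiR: "\<forall>x\<in>?R. \<phi> x \<in> ?R"
    and phiA: "\<forall>x\<in>?R. \<forall>y\<in>?R. \<phi> (x + y) = \<phi> x + \<phi> y"
    and phiL: "\<forall>r\<in>?R. \<forall>s\<in>?R. \<phi> (r ^ q * s) = r * \<phi> s" and phid: "\<phi> d = 1"
    using fs unfolding frob_splits_def by blast
  have R0: "0 \<in> ?R" unfolding hibi_ring_def by (rule gen_alg.zero)
  have Radd: "x + y \<in> ?R" if "x \<in> ?R" "y \<in> ?R" for x y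
    using that unfolding hibi_ring_def by (rule gen_alg.add)
  have "\<phi> (0 + 0) = \<phi> 0 + \<phi> 0" using phiA R0 by blast
  then have phi0: "\<phi> 0 = 0" by simp
  have sumR: "finite A \<Longrightarrow> (\<forall>a\<in>A. f a \<in> ?R) \<Longrightarrow> sum f A \<in> ?R \<and> \<phi> (sum f A) = (\<Sum>a\<in>A. \<phi> (f a))" for A f
  proof (induction A rule: finite_induct)
    case empty then show ?case using R0 phi0 by simp
  next
    case (insert a A)
    then show ?case using Radd phiA by simp
  qed
  have dkeys: "ks d \<subseteq> {\<alpha>. inS P le \<alpha> \<and> N \<le> lk \<alpha> None}" by (rule ideal_pow_keys[OF fin dI])
  have mons: "\<forall>\<alpha>\<in>ks d. sg \<alpha> (lk d \<alpha>) \<in> ?R" using dkeys single_in_R[OF fin] by blast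
  have e1: "\<phi> d = \<phi> (\<Sum>\<alpha>\<in>ks d. sg \<alpha> (lk d \<alpha>))"
    using poly_expand[of d] by (rule arg_cong)
  have e2: "\<phi> (\<Sum>\<alpha>\<in>ks d. sg \<alpha> (lk d \<alpha>)) = (\<Sum>\<alpha>\<in>ks d. \<phi> (sg \<alpha> (lk d \<alpha>)))"
    using sumR[OF finite_keys mons] by blast
  have "lk (\<phi> d) 0 = 1" using phid by simp
  then have "(\<Sum>\<alpha>\<in>ks d. lk (\<phi> (sg \<alpha> (lk d \<alpha>))) 0) = 1"
    unfolding e1 e2 by (simp add: lookup_sum)
  then have "\<not> (\<forall>\<alpha>\<in>ks d. lk (\<phi> (sg \<alpha> (lk d \<alpha>))) 0 = 0)"
    using sum.neutral[of "ks d" "\<lambda>\<alpha>. lk (\<phi> (sg \<alpha> (lk d \<alpha>))) 0"] by force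
  then obtain \<alpha> where \<alpha>d: "\<alpha> \<in> ks d" and nz: "lk (\<phi> (sg \<alpha> (lk d \<alpha>))) 0 \<noteq> 0"
    by blast
  have \<alpha>S: "inS P le \<alpha>" and \<alpha>N: "N \<le> lk \<alpha> None" using \<alpha>d dkeys by auto
  have Cch: "C \<subseteq> P_bar P" "\<forall>x\<in>C. \<forall>y\<in>C. le_bar le x y \<or> le_bar le y x"
    using C unfolding is_max_chain_def is_chain_def by auto
  have fC: "finite C" using Cch(1) fin finite_subset unfolding P_bar_def by blast
  have step: "\<forall>x\<in>C. \<forall>y\<in>C. le_bar le x y \<and> x \<noteq> y \<and> (\<forall>w\<in>C. le_bar le x w \<and> le_bar le w y \<longrightarrow> w = x \<or> w = y)
      \<longrightarrow> Bf \<alpha> x \<le> Bf \<alpha> y + (q - 1)"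
  proof (intro ballI impI)
    fix x y assume xy: "x \<in> C" "y \<in> C"
      "le_bar le x y \<and> x \<noteq> y \<and> (\<forall>w\<in>C. le_bar le x w \<and> le_bar le w y \<longrightarrow> w = x \<or> w = y)"
    show "Bf \<alpha> x \<le> Bf \<alpha> y + (q - 1)"
    proof (rule ccontr)
      assume "\<not> Bf \<alpha> x \<le> Bf \<alpha> y + (q - 1)"
      then have big: "Bf \<alpha> y + q \<le> Bf \<alpha> x" using q2 by simp
      have cov: "\<forall>z\<in>P_bar P. le_bar le x z \<and> le_bar le z y \<longrightarrow> z = x \<or> z = y"
        using max_chain_cover[OF pos C xy(1,2)] xy(3) by blast
      have "lk (\<phi> (sg \<alpha> (lk d \<alpha>))) 0 = 0"
        by (rule phi_kill[OF fin pos phiR phiL \<alpha>S _ _ _ _ cov big]) (use xy Cch in auto)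
      then show False using nz by simp
    qed
  qed
  have top: "\<forall>x\<in>C. le_bar le x PInf"
  proof
    fix x show "le_bar le x PInf" by (cases x) auto
  qed
  have "Bf \<alpha> MInf \<le> Bf \<alpha> PInf + (card C - 1) * (q - 1)"
    by (rule chain_bound[OF poset_bar[OF pos] fC Cch max_chain_bar_ends[OF C] _ top step]) simp
  then have "N \<le> (card C - 1) * (q - 1)" using \<alpha>N by simp
  then have "real N \<le> real (card C - 1) * real (q - 1)" by (metis of_nat_le_iff of_nat_mult)
  moreover have "card C \<ge> 1" using fC max_chain_bar_ends(1)[OF C] by (metis One_nat_def Suc_leI card_gt_0_iff empty_iff)
  ultimately have A: "real N \<le> (real (card C) - 1) * (real q - 1)" using q2 by (simp add: of_nat_diff)
  have "t * (real q - 1) \<le> real N" unfolding N_def using t0 q2 by (simp add: real_nat_ceiling_ge)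
  then have "t * (real q - 1) \<le> (real (card C) - 1) * (real q - 1)" using A by linarith
  moreover have "real q - 1 > 0" using q2 by simp
  ultimately show ?thesis by simp
qed

theorem corollary3p8:
  fixes P :: "'a set" and le :: "'a \<Rightarrow> 'a \<Rightarrow> bool" and p :: nat
  assumes "prime p" and "CHAR('k::field) = p"
    and "\<forall>y::'k. \<exists>x. x ^ p = y"
    and "finite P" and "is_poset P le"
  shows "fpt (hibi_ring P le :: ('a, 'k) mpoly set) (hibi_max P le) p
           \<le> ereal (real_of_int (Min (chain_len ` {C. is_max_chain (P_bar P) (le_bar le) C})))
     \<and> Min (chain_len ` {C. is_max_chain (P_bar P) (le_bar le) C})
         = Min (chain_len ` {C. is_max_chain P le C}) + 2"
proof -
  define MCb where "MCb = {C. is_max_chain (P_bar P) (le_bar le) C}"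
  define MC where "MC = {C. is_max_chain P le C}"
  have fin: "finite P" and pos: "is_poset P le" using assms by auto
  have MCb_eq: "MCb = emb ` MC"
    unfolding MCb_def MC_def using emb_max max_chain_bar_emb by blast
  have fMC: "finite MC"
  proof (rule finite_subset[of _ "Pow P"])
    show "MC \<subseteq> Pow P" unfolding MC_def is_max_chain_def is_chain_def by auto
  qed (use fin in simp)
  have neMC: "MC \<noteq> {}" using max_chain_exists[OF fin] unfolding MC_def by blast
  have "chain_len (emb D) = chain_len D + 2" if "D \<in> MC" for D
  proof -
    have "finite D" using that fin unfolding MC_def is_max_chain_def is_chain_def by (auto intro: finite_subset)
    then show ?thesis unfolding chain_len_def by (simp add: card_emb)
  qed
  then have img: "chain_len ` MCb = (\<lambda>D. chain_len D + 2) ` MC"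
    unfolding MCb_eq image_image by (rule image_cong[OF refl])
  have eq2: "Min (chain_len ` MCb) = Min (chain_len ` MC) + 2"
    unfolding img using Min_add_commute[OF fMC neMC, of chain_len 2] by simp
  have fMCb: "finite (chain_len ` MCb)" "chain_len ` MCb \<noteq> {}" using img fMC neMC by auto
  obtain C where C: "C \<in> MCb" "chain_len C = Min (chain_len ` MCb)"
    using Min_in[OF fMCb] by auto
  have part1: "fpt (hibi_ring P le :: ('a, 'k) mpoly set) (hibi_max P le) p \<le> ereal (real_of_int (Min (chain_len ` MCb)))"
    unfolding fpt_def
  proof (rule Sup_least)
    fix x assume "x \<in> {ereal t |t. 0 \<le> t \<and> F_pure (hibi_ring P le :: ('a, 'k) mpoly set) (hibi_max P le) p t}"
    then obtain t where t: "x = ereal t" "0 \<le> t" "F_pure (hibi_ring P le :: ('a, 'k) mpoly set) (hibi_max P le) p t"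
      by blast
    have "t \<le> real (card C) - 1"
      by (rule main_bound[OF assms(1) fin pos _ t(2) t(3)]) (use C(1) in \<open>simp add: MCb_def\<close>)
    moreover have "real_of_int (chain_len C) = real (card C) - 1" unfolding chain_len_def by simp
    ultimately show "x \<le> ereal (real_of_int (Min (chain_len ` MCb)))" using t(1) C(2) by simp
  qed
  show ?thesis using part1 eq2 unfolding MCb_def MC_def by simp
qed

end
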